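(* Let $X$ be a complex Banach space, $\mathcal{F}$ a commutative algebra with unit, $\Phi:\mathcal{F}\to\mathcal{C}(X)$ a calculus, and $f\in\mathcal{F}$. If $\mathcal{E}\subseteq\mathrm{reg}(f,\Phi)$ is a $\Phi$-anchor set, then $\mathcal{E}$ determines $\Phi$ at $f$, i.e., for all $x,y\in X$: $\Phi(f)x=y$ if and only if $\Phi(ef)x=\Phi(e)y$ for all $e\in\mathcal{E}$.
   Context: $\mathcal{L}(X)$, $\mathcal{C}(X)$: bounded, resp. closed linear operators on $X$; operator inclusions are graph inclusions, sums/products have natural domains, and "$Tx=y$" means $x\in\mathrm{dom}(T)$ and $Tx=y$. A proto-calculus is a map $\Phi:\mathcal{F}\to\mathcal{C}(X)$ ($\mathcal{F}$ a unital algebra) with (FC1) $\Phi(\mathbf{1})=I$; (FC2) $\lambda\Phi(f)\subseteq\Phi(\lambda f)$, $\Phi(f)+\Phi(g)\subseteq\Phi(f+g)$; (FC3) $\Phi(f)\Phi(g)\subseteq\Phi(fg)$ with $\mathrm{dom}(\Phi(f)\Phi(g))=\mathrm{dom}(\Phi(g))\cap\mathrm{dom}(\Phi(fg))$. Let $\mathrm{bdd}(\mathcal{F},\Phi)=\{f:\Phi(f)\in\mathcal{L}(X)\}$ and for $f\in\mathcal{F}$, $\mathrm{reg}(f,\Phi)=\{e\in\mathcal{F}: e,\ ef\in\mathrm{bdd}(\mathcal{F},\Phi)\}$. A subset $\mathcal{M}\subseteq\mathrm{bdd}(\mathcal{F},\Phi)$ determines $\Phi$ at $f$ if for all $x,y\in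 X$: $\Phi(f)x=y\iff\Phi(ef)x=\Phi(e)y$ for all $e\in\mathcal{M}\cap\mathrm{reg}(f,\Phi)$. A proto-calculus is a calculus if (FC4) $\mathrm{bdd}(\mathcal{F},\Phi)$ determines $\Phi$ at every $f\in\mathcal{F}$. A nonempty subset $\mathcal{M}\subseteq\mathrm{bdd}(\mathcal{F},\Phi)$ is a $\Phi$-anchor set if $\bigcap_{e\in\mathcal{M}}\ker\Phi(e)=\{0\}$. *)

theory Defs
  imports "HOL-Analysis.Analysis"
begin

class cvector = ab_group_add +
  fixes scaleC :: "complex \<Rightarrow> 'a \<Rightarrow> 'a"
  assumes scaleC_add_right: "scaleC a (x + y) = scaleC a x + scaleC a y"
    and scaleC_add_left: "scaleC (a + b) x = scaleC a x + scaleC b x"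
    and scaleC_scaleC: "scaleC a (scaleC b x) = scaleC (a * b) x"
    and scaleC_one: "scaleC 1 x = x"

class comm_calgebra_1 = cvector + comm_ring_1 +
  assumes scaleC_mult_left: "scaleC a x * y = scaleC a (x * y)"

class cbanach = cvector + banach +
  assumes scaleR_scaleC: "scaleR r x = scaleC (complex_of_real r) x"
    and norm_scaleC: "norm (scaleC a x) = cmod a * norm x"

text \<open>A (possibly unbounded) operator on X is represented by its graph
  T :: ('a \<times> 'a) set; "T x = y" means (x, y) \<in> T.  Operator inclusion is graph
  inclusion.\<close>

definition lin_op :: "('a::cvector \<times> 'a) set \<Rightarrow> bool" where
  "lin_op T \<longleftrightarrow> (0, 0) \<in> T
     \<and> (\<forall>x y u v. (x, y) \<in> T \<longrightarrow> (u, v) \<in> T \<longrightarrow> (x + u, y + v) \<in> T)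
     \<and> (\<forall>c x y. (x, y) \<in> T \<longrightarrow> (scaleC c x, scaleC c y) \<in> T)
     \<and> (\<forall>x y z. (x, y) \<in> T \<longrightarrow> (x, z) \<in> T \<longrightarrow> y = z)"

definition closed_op :: "('a::cbanach \<times> 'a) set \<Rightarrow> bool" where
  "closed_op T \<longleftrightarrow> lin_op T \<and> closed T"

definition bounded_op :: "('a::cbanach \<times> 'a) set \<Rightarrow> bool" where
  "bounded_op T \<longleftrightarrow> lin_op T \<and> Domain T = UNIV
     \<and> (\<exists>C. \<forall>x y. (x, y) \<in> T \<longrightarrow> norm y \<le> C * norm x)"

definition op_scale :: "complex \<Rightarrow> ('a::cvector \<times> 'a) set \<Rightarrow> ('a \<times> 'a) set" where
  "op_scale c T = {(x, scaleC c y) | x y. (x, y) \<in> T}"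

definition op_add :: "('a::cvector \<times> 'a) set \<Rightarrow> ('a \<times> 'a) set \<Rightarrow> ('a \<times> 'a) set" where
  "op_add T S = {(x, y + z) | x y z. (x, y) \<in> T \<and> (x, z) \<in> S}"

text \<open>Product T S (apply S first), with natural domain.\<close>
definition op_mult :: "('a \<times> 'a) set \<Rightarrow> ('a \<times> 'a) set \<Rightarrow> ('a \<times> 'a) set" where
  "op_mult T S = {(x, z) | x y z. (x, y) \<in> S \<and> (y, z) \<in> T}"

definition op_ker :: "('a::cvector \<times> 'a) set \<Rightarrow> 'a set" where
  "op_ker T = {x. (x, 0) \<in> T}"

definition proto_calculus :: "('f::comm_calgebra_1 \<Rightarrow> ('a::cbanach \<times> 'a) set) \<Rightarrow> bool" where
  "proto_calculus \<Phi> \<longleftrightarrow>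
     (\<forall>f. closed_op (\<Phi> f))
     \<and> \<Phi> 1 = Id
     \<and> (\<forall>c f. op_scale c (\<Phi> f) \<subseteq> \<Phi> (scaleC c f))
     \<and> (\<forall>f g. op_add (\<Phi> f) (\<Phi> g) \<subseteq> \<Phi> (f + g))
     \<and> (\<forall>f g. op_mult (\<Phi> f) (\<Phi> g) \<subseteq> \<Phi> (f * g)
              \<and> Domain (op_mult (\<Phi> f) (\<Phi> g)) = Domain (\<Phi> g) \<inter> Domain (\<Phi> (f * g)))"

definition bdd :: "('f::comm_calgebra_1 \<Rightarrow> ('a::cbanach \<times> 'a) set) \<Rightarrow> 'f set" where
  "bdd \<Phi> = {f. bounded_op (\<Phi> f)}"

definition reg :: "'f::comm_calgebra_1 \<Rightarrow> ('f \<Rightarrow> ('a::cbanach \<times> 'a) set) \<Rightarrow> 'f set" where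
  "reg f \<Phi> = {e. e \<in> bdd \<Phi> \<and> e * f \<in> bdd \<Phi>}"

definition determines :: "'f set \<Rightarrow> ('f::comm_calgebra_1 \<Rightarrow> ('a::cbanach \<times> 'a) set) \<Rightarrow> 'f \<Rightarrow> bool" where
  "determines M \<Phi> f \<longleftrightarrow> M \<subseteq> bdd \<Phi> \<and>
     (\<forall>x y. (x, y) \<in> \<Phi> f \<longleftrightarrow>
        (\<forall>e \<in> M \<inter> reg f \<Phi>. \<exists>w. (x, w) \<in> \<Phi> (e * f) \<and> (y, w) \<in> \<Phi> e))"

definition calculus :: "('f::comm_calgebra_1 \<Rightarrow> ('a::cbanach \<times> 'a) set) \<Rightarrow> bool" where
  "calculus \<Phi> \<longleftrightarrow> proto_calculus \<Phi> \<and> (\<forall>f. determines (bdd \<Phi>) \<Phi> f)"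

definition anchor_set :: "'f set \<Rightarrow> ('f::comm_calgebra_1 \<Rightarrow> ('a::cbanach \<times> 'a) set) \<Rightarrow> bool" where
  "anchor_set M \<Phi> \<longleftrightarrow> M \<noteq> {} \<and> M \<subseteq> bdd \<Phi> \<and> (\<Inter>e\<in>M. op_ker (\<Phi> e)) = {0}"

end

theory Submission
  imports Defs
begin

lemma scaleC_zero_left': "scaleC 0 (v::'a::cvector) = 0"
proof -
  have "scaleC (0+0) v = scaleC 0 v + scaleC 0 v" by (rule scaleC_add_left)
  then show ?thesis by simp
qed

lemma scaleC_minus_one': "scaleC (-1) (v::'a::cvector) = - v"
proof -
  have "scaleC (1 + -1) v = scaleC 1 v + scaleC (-1) v" by (rule scaleC_add_left)
  then have "0 = v + scaleC (-1) v" by (simp add: scaleC_zero_left' scaleC_one)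
  then show ?thesis by (metis add.commute add_minus_cancel add.right_neutral)
qed

lemma lin_op_diff:
  assumes "lin_op T" "(a, u) \<in> T" "(b, u) \<in> T"
  shows "(a - b, 0) \<in> T"
proof -
  have "(scaleC (-1) b, scaleC (-1) u) \<in> T" using assms(1,3) unfolding lin_op_def by simp
  then have "(- b, - u) \<in> T" by (simp add: scaleC_minus_one')
  moreover have "\<forall>x y u v. (x, y) \<in> T \<longrightarrow> (u, v) \<in> T \<longrightarrow> (x + u, y + v) \<in> T"
    using assms(1) unfolding lin_op_def by simp
  ultimately have "(a + - b, u + - u) \<in> T" using assms(2) by blast
  then show ?thesis by simp
qed

lemma lin_op_fun: "lin_op T \<Longrightarrow> (x, y) \<in> T \<Longrightarrow> (x, z) \<in> T \<Longrightarrow> y = z"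
  unfolding lin_op_def by simp

lemma bounded_ex: "bounded_op T \<Longrightarrow> \<exists>y. (x, y) \<in> T"
  unfolding bounded_op_def by (metis Domain_iff UNIV_I)

lemma mult_in:
  assumes "proto_calculus \<Phi>" "(x, y) \<in> \<Phi> g" "(y, z) \<in> \<Phi> f"
  shows "(x, z) \<in> \<Phi> (f * g)"
proof -
  have "(x, z) \<in> op_mult (\<Phi> f) (\<Phi> g)" using assms(2,3) unfolding op_mult_def by blast
  moreover have "op_mult (\<Phi> f) (\<Phi> g) \<subseteq> \<Phi> (f * g)" using assms(1) unfolding proto_calculus_def by simp
  ultimately show ?thesis by (rule subsetD[rotated])
qed

theorem theorem4p1:
  fixes \<Phi> :: "'f::comm_calgebra_1 \<Rightarrow> ('a::cbanach \<times> 'a) set"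
    and f :: 'f and E :: "'f set"
  assumes "calculus \<Phi>"
    and "E \<subseteq> reg f \<Phi>"
    and "anchor_set E \<Phi>"
  shows "determines E \<Phi> f"
proof -
  have pc: "proto_calculus \<Phi>" and det: "\<And>g. determines (bdd \<Phi>) \<Phi> g"
    using assms(1) unfolding calculus_def by auto
  have lin: "\<And>g. lin_op (\<Phi> g)" using pc unfolding proto_calculus_def closed_op_def by simp
  have Eb: "E \<subseteq> bdd \<Phi>" using assms(2) unfolding reg_def by auto
  have bex: "\<And>g x. g \<in> bdd \<Phi> \<Longrightarrow> \<exists>y. (x, y) \<in> \<Phi> g"
    using bounded_ex unfolding bdd_def by blast
  have ker: "\<And>v. (\<forall>e\<in>E. (v, 0) \<in> \<Phi> e) \<Longrightarrow> v = 0"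
  proof -
    fix v assume "\<forall>e\<in>E. (v, 0) \<in> \<Phi> e"
    then have "v \<in> (\<Inter>e\<in>E. op_ker (\<Phi> e))" unfolding op_ker_def by auto
    then show "v = 0" using assms(3) unfolding anchor_set_def by auto
  qed
  have main: "(x, y) \<in> \<Phi> f \<longleftrightarrow>
        (\<forall>e \<in> E \<inter> reg f \<Phi>. \<exists>w. (x, w) \<in> \<Phi> (e * f) \<and> (y, w) \<in> \<Phi> e)" for x y
  proof
    assume xy: "(x, y) \<in> \<Phi> f"
    show "\<forall>e \<in> E \<inter> reg f \<Phi>. \<exists>w. (x, w) \<in> \<Phi> (e * f) \<and> (y, w) \<in> \<Phi> e"
    proof
      fix e assume "e \<in> E \<inter> reg f \<Phi>"
      then obtain w where w: "(y, w) \<in> \<Phi> e" using Eb bex by blast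
      then have "(x, w) \<in> \<Phi> (e * f)" using mult_in[OF pc xy w] by simp
      then show "\<exists>w. (x, w) \<in> \<Phi> (e * f) \<and> (y, w) \<in> \<Phi> e" using w by blast
    qed
  next
    assume H: "\<forall>e \<in> E \<inter> reg f \<Phi>. \<exists>w. (x, w) \<in> \<Phi> (e * f) \<and> (y, w) \<in> \<Phi> e"
    have "\<forall>g \<in> bdd \<Phi> \<inter> reg f \<Phi>. \<exists>w. (x, w) \<in> \<Phi> (g * f) \<and> (y, w) \<in> \<Phi> g"
    proof
      fix g assume g: "g \<in> bdd \<Phi> \<inter> reg f \<Phi>"
      then have gb: "g \<in> bdd \<Phi>" and gfb: "g * f \<in> bdd \<Phi>" unfolding reg_def by auto
      obtain a where a: "(x, a) \<in> \<Phi> (g * f)" using bex[OF gfb] by blast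
      obtain b where b: "(y, b) \<in> \<Phi> g" using bex[OF gb] by blast
      have "\<forall>e\<in>E. (a - b, 0) \<in> \<Phi> e"
      proof
        fix e assume eE: "e \<in> E"
        then have eb: "e \<in> bdd \<Phi>" using Eb by auto
        obtain w where w1: "(x, w) \<in> \<Phi> (e * f)" and w2: "(y, w) \<in> \<Phi> e"
          using H eE assms(2) by blast
        obtain u where u: "(a, u) \<in> \<Phi> e" using bex[OF eb] by blast
        obtain v where v: "(b, v) \<in> \<Phi> e" using bex[OF eb] by blast
        obtain z where z: "(w, z) \<in> \<Phi> g" using bex[OF gb] by blast
        have 1: "(x, u) \<in> \<Phi> (e * (g * f))" using mult_in[OF pc a u] .
        have 2: "(x, z) \<in> \<Phi> (g * (e * f))" using mult_in[OF pc w1 z] .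
        have eq: "e * (g * f) = g * (e * f)" by (simp add: ac_simps)
        have uz: "u = z" using lin_op_fun[OF lin 1] 2 eq by simp
        have 3: "(y, z) \<in> \<Phi> (g * e)" using mult_in[OF pc w2 z] .
        have 4: "(y, v) \<in> \<Phi> (e * g)" using mult_in[OF pc b v] .
        have "z = v" using lin_op_fun[OF lin 3] 4 by (simp add: ac_simps)
        then have "(b, u) \<in> \<Phi> e" using v uz by simp
        then show "(a - b, 0) \<in> \<Phi> e" using lin_op_diff[OF lin u] by blast
      qed
      then have "a - b = 0" using ker[of "a - b"] by blast
      then have "a = b" by simp
      then show "\<exists>w. (x, w) \<in> \<Phi> (g * f) \<and> (y, w) \<in> \<Phi> g" using a b by blast
    qed
    then show "(x, y) \<in> \<Phi> f" using det[of f] unfolding determines_def by blast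
  qed
  show ?thesis unfolding determines_def using Eb main by blast
qed

end
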